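(* Let $P$ be a finite poset, $\epsilon\in\{1,-1\}$ and $\xi\in S^{(\epsilon)}$ with $d=\xi(-\infty)>q^{(\epsilon)}\mathrm{dist}(-\infty,\infty)$. Then every $C\in C_\xi^{[d-\epsilon]}$ contains an element $z$ with $\xi(z)>\epsilon$.
   Context: $P^\pm=P\cup\{-\infty,\infty\}$, $-\infty<z<\infty$ for $z\in P$; $P^-=P\cup\{-\infty\}$. Saturated chain: $x=z_0\lessdot\cdots\lessdot z_t=y$, length $t$; $q^{(\epsilon)}\mathrm{dist}(x,y)=\max\{\epsilon t:$ saturated chain of length $t$ from $x$ to $y$ in $P^\pm\}$. $\xi^+(B)=\sum_{b\in B}\xi(b)$. $S^{(m)}=\{\xi\in\mathbb Z^{P^-}:\xi(x)\ge m\ \forall x\in P,\ \xi(-\infty)\ge\xi^+(C)+m$ for every maximal chain $C$\}; $C_\xi^{[m]}$ = maximal chains $C$ of $P$ with $\xi^+(C)=m$. *)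

theory Defs
  imports Main
begin

text \<open>The poset P is a finite subset of a type with a partial order (every finite
poset is isomorphic to one of these). P^\<pm> = P \<union> {-\<infinity>, \<infinity>}.\<close>

datatype 'a ext = NInf | El 'a | PInf

fun ext_less :: "'a::order ext \<Rightarrow> 'a ext \<Rightarrow> bool" where
  "ext_less NInf NInf = False"
| "ext_less NInf _ = True"
| "ext_less (El x) (El y) = (x < y)"
| "ext_less (El x) PInf = True"
| "ext_less (El x) NInf = False"
| "ext_less PInf _ = False"

definition ext_carrier :: "'a set \<Rightarrow> 'a ext set" where
  "ext_carrier P = {NInf, PInf} \<union> El ` P"

definition covers :: "'a::order set \<Rightarrow> 'a ext \<Rightarrow> 'a ext \<Rightarrow> bool" where
  "covers P x y \<longleftrightarrow> ext_less x y \<and> \<not> (\<exists>z\<in>ext_carrier P. ext_less x z \<and> ext_less z y)"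

text \<open>A saturated chain x = z_0 \<lessdot> ... \<lessdot> z_t = y in P^\<pm>, given as the list
[z_0, ..., z_t]; its length is t.\<close>
definition sat_chain :: "'a::order set \<Rightarrow> 'a ext \<Rightarrow> 'a ext \<Rightarrow> 'a ext list \<Rightarrow> bool" where
  "sat_chain P x y zs \<longleftrightarrow> zs \<noteq> [] \<and> set zs \<subseteq> ext_carrier P \<and> hd zs = x \<and> last zs = y \<and>
     (\<forall>i. Suc i < length zs \<longrightarrow> covers P (zs ! i) (zs ! Suc i))"

definition qdist :: "'a::order set \<Rightarrow> int \<Rightarrow> 'a ext \<Rightarrow> 'a ext \<Rightarrow> int" where
  "qdist P \<epsilon> x y = Max {\<epsilon> * int (length zs - 1) | zs. sat_chain P x y zs}"

definition is_chain :: "'a::order set \<Rightarrow> 'a set \<Rightarrow> bool" where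
  "is_chain P C \<longleftrightarrow> C \<subseteq> P \<and> (\<forall>x\<in>C. \<forall>y\<in>C. x \<le> y \<or> y \<le> x)"

definition maximal_chain :: "'a::order set \<Rightarrow> 'a set \<Rightarrow> bool" where
  "maximal_chain P C \<longleftrightarrow> is_chain P C \<and> (\<forall>D. is_chain P D \<and> C \<subseteq> D \<longrightarrow> D = C)"

text \<open>\<xi> \<in> \<int>^{P^-} is modelled as a function on 'a ext; only its values on P^- matter.\<close>
definition xiplus :: "('a ext \<Rightarrow> int) \<Rightarrow> 'a set \<Rightarrow> int" where
  "xiplus \<xi> B = (\<Sum>b\<in>B. \<xi> (El b))"

definition S_set :: "'a::order set \<Rightarrow> int \<Rightarrow> ('a ext \<Rightarrow> int) set" where
  "S_set P m = {\<xi>. (\<forall>x\<in>P. \<xi> (El x) \<ge> m) \<and>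
      (\<forall>C. maximal_chain P C \<longrightarrow> \<xi> NInf \<ge> xiplus \<xi> C + m)}"

definition C_set :: "'a::order set \<Rightarrow> ('a ext \<Rightarrow> int) \<Rightarrow> int \<Rightarrow> 'a set set" where
  "C_set P \<xi> m = {C. maximal_chain P C \<and> xiplus \<xi> C = m}"

end

theory Submission
  imports Defs
begin

lemma chain_sorted_list:
  fixes C :: "'a::order set"
  shows "finite C \<Longrightarrow> (\<forall>x\<in>C. \<forall>y\<in>C. x \<le> y \<or> y \<le> x) \<Longrightarrow> \<exists>xs. set xs = C \<and> sorted_wrt (<) xs"
proof (induction "card C" arbitrary: C rule: less_induct)
  case less
  show ?case
  proof (cases "C = {}")
    case True then show ?thesis by auto
  next
    case False
    obtain m where m: "m \<in> C" "\<forall>b\<in>C. b \<le> m \<longrightarrow> m = b"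
      using finite_has_minimal[OF less.prems(1) False] by blast
    have "card (C - {m}) < card C" using card_Diff1_less[OF less.prems(1) m(1)] .
    then obtain xs where xs: "set xs = C - {m}" "sorted_wrt (<) xs"
      using less.hyps[of "C - {m}"] less.prems by auto
    have "\<forall>y\<in>C - {m}. m < y" using m less.prems(2) by (metis DiffE insertI1 order.order_iff_strict)
    then show ?thesis using xs m by (intro exI[of _ "m # xs"]) auto
  qed
qed

lemma ext_less_trans: "ext_less a b \<Longrightarrow> ext_less b c \<Longrightarrow> ext_less a c"
  by (cases a; cases b; cases c) auto

lemma ext_less_irrefl: "\<not> ext_less a a"
  by (cases a) auto

lemma transp_ext_less: "transp ext_less"
  by (meson ext_less_trans transpI)

lemma sorted_wrt_distinct_irr:
  "sorted_wrt ext_less xs \<Longrightarrow> distinct xs"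
  by (induction xs) (auto simp: ext_less_irrefl)

lemma sat_chain_distinct: "sat_chain P x y zs \<Longrightarrow> distinct zs"
  unfolding sat_chain_def covers_def
  by (metis sorted_wrt_distinct_irr sorted_wrt_iff_nth_Suc_transp transp_ext_less)

theorem mainTheorem14:
  fixes P :: "'a::order set" and \<epsilon> :: int and \<xi> :: "'a ext \<Rightarrow> int" and d :: int
  assumes "finite P"
    and "\<epsilon> \<in> {1, -1}"
    and "\<xi> \<in> S_set P \<epsilon>"
    and "d = \<xi> NInf"
    and "d > qdist P \<epsilon> NInf PInf"
    and "C \<in> C_set P \<xi> (d - \<epsilon>)"
  shows "\<exists>z\<in>C. \<xi> (El z) > \<epsilon>"
proof (rule ccontr)
  assume nz: "\<not> (\<exists>z\<in>C. \<xi> (El z) > \<epsilon>)"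
  have mc: "maximal_chain P C" and sumC: "xiplus \<xi> C = d - \<epsilon>" using assms(6) by (auto simp: C_set_def)
  have CP: "C \<subseteq> P" and ch: "\<forall>x\<in>C. \<forall>y\<in>C. x \<le> y \<or> y \<le> x"
    using mc by (auto simp: maximal_chain_def is_chain_def)
  have finC: "finite C" using CP assms(1) finite_subset by blast
  have eq: "\<forall>z\<in>C. \<xi> (El z) = \<epsilon>" using nz assms(3) CP by (force simp: S_set_def)
  have "xiplus \<xi> C = \<epsilon> * int (card C)" unfolding xiplus_def using eq by simp
  hence dv: "d = \<epsilon> * (int (card C) + 1)" using sumC by (simp add: algebra_simps)
  obtain xs where xs: "set xs = C" "sorted_wrt (<) xs" using chain_sorted_list[OF finC ch] by blast
  have dxs: "distinct xs" using xs(2) by (induction xs) auto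
  define L where "L = NInf # map El xs @ [PInf]"
  have sL: "sorted_wrt ext_less L"
    unfolding L_def using xs(2)
    by (auto simp: sorted_wrt_append sorted_wrt_map elim: sorted_wrt_mono_rel[rotated])
  have setL: "set L \<subseteq> ext_carrier P" unfolding L_def ext_carrier_def using xs(1) CP by auto
  have cov: "covers P (L ! i) (L ! Suc i)" if i: "Suc i < length L" for i
  proof -
    have lt: "ext_less (L ! i) (L ! Suc i)" using sL i by (simp add: sorted_wrt_iff_nth_less)
    show ?thesis unfolding covers_def
    proof (intro conjI lt notI)
      assume "\<exists>z\<in>ext_carrier P. ext_less (L ! i) z \<and> ext_less z (L ! Suc i)"
      then obtain z where z: "z \<in> ext_carrier P" "ext_less (L ! i) z" "ext_less z (L ! Suc i)" by blast
      have ordL: "ext_less (L ! j) (L ! k)" if "j < k" "k < length L" for j k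
        using sL that by (simp add: sorted_wrt_iff_nth_less)
      have comp1: "ext_less (L ! j) z \<or> ext_less z (L ! j)" if j: "j < length L" for j
      proof (cases "j \<le> i")
        case True
        hence "L ! j = L ! i \<or> ext_less (L ! j) (L ! i)" using ordL i
          by (metis le_neq_implies_less Suc_lessD)
        then show ?thesis using z(2) ext_less_trans by metis
      next
        case False
        hence "L ! j = L ! Suc i \<or> ext_less (L ! Suc i) (L ! j)" using ordL j
          by (metis le_neq_implies_less not_less_eq_eq)
        then show ?thesis using z(3) ext_less_trans by metis
      qed
      have comp: "ext_less (L ! j) z \<or> ext_less z (L ! j)" "L ! j \<noteq> z" if j: "j < length L" for j
        using comp1[OF j] ext_less_irrefl by auto
      have "z \<noteq> NInf" "z \<noteq> PInf" using z(2,3) by (cases "L ! i"; auto)+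
      then obtain w where w: "z = El w" "w \<in> P" using z(1) by (cases z) (auto simp: ext_carrier_def)
      have "\<forall>y\<in>set L. ext_less y z \<or> ext_less z y \<and> y \<noteq> z"
      proof
        fix y assume "y \<in> set L"
        then obtain j where "j < length L" "y = L ! j" by (auto simp: in_set_conv_nth)
        then show "ext_less y z \<or> ext_less z y \<and> y \<noteq> z" using comp by simp
      qed
      hence wC: "w \<notin> C" and wc: "\<forall>c\<in>C. c < w \<or> w < c"
        using w(1) xs(1) unfolding L_def by auto
      have "is_chain P (insert w C)" using wc ch CP w(2) unfolding is_chain_def
        by (auto intro: less_imp_le)
      hence "insert w C = C" using mc unfolding maximal_chain_def by blast
      thus False using wC by blast
    qed
  qed
  have sc: "sat_chain P NInf PInf L"
    unfolding sat_chain_def using setL cov by (simp add: L_def)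
  have lenL: "int (length L - 1) = int (card C) + 1"
    unfolding L_def using distinct_card[OF dxs] xs(1) by simp
  define V where "V = {\<epsilon> * int (length zs - 1) | zs. sat_chain P NInf PInf zs}"
  have "V \<subseteq> (\<lambda>zs. \<epsilon> * int (length zs - 1)) ` {zs. set zs \<subseteq> ext_carrier P \<and> distinct zs}"
  proof
    fix v assume "v \<in> V"
    then obtain zs where zs: "v = \<epsilon> * int (length zs - 1)" "sat_chain P NInf PInf zs"
      unfolding V_def by blast
    have "set zs \<subseteq> ext_carrier P" "distinct zs"
      using zs(2) sat_chain_distinct unfolding sat_chain_def by blast+
    thus "v \<in> (\<lambda>zs. \<epsilon> * int (length zs - 1)) ` {zs. set zs \<subseteq> ext_carrier P \<and> distinct zs}"
      using zs(1) by blast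
  qed
  moreover have "finite (ext_carrier P)" using assms(1) by (simp add: ext_carrier_def)
  ultimately have finV: "finite V" by (rule finite_subset[OF _ finite_imageI[OF finite_subset_distinct]])
  have "d = \<epsilon> * int (length L - 1)" using lenL dv by simp
  hence "d \<in> V" unfolding V_def using sc by blast
  hence "d \<le> Max V" by (rule Max_ge[OF finV])
  hence "d \<le> qdist P \<epsilon> NInf PInf" unfolding qdist_def V_def .
  thus False using assms(5) by simp
qed

end
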